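(* Let $\eta\in\mathbb{R}$ with $\eta^2<2$, $h>0$, $x_0\in\mathbb{R}$, and let $(\Delta W_n)_{n\ge0}$ be i.i.d. $\mathcal{N}(0,h)$ random variables. For $f(x)=-x$, $g(x)=1+\eta x$ and $F(x)=f(x)-\tfrac12g'(x)g(x)$, define the stochastic Heun iterates $$x_{n+1}=x_n+\tfrac12(F_1+F_2)h+\tfrac12(G_1+G_2)\Delta W_n,$$ where $F_1=F(x_n)$, $G_1=g(x_n)$, $F_2=F(x_n+F_1h+G_1\Delta W_n)$, $G_2=g(x_n+F_1h+G_1\Delta W_n)$, starting from the deterministic value $x_0$, and let $\mu^{(2)}_n=\mathbb{E}[x_n^2]$. Suppose $0<h<\frac{8}{(2+\eta^2)^2}$ and $$\Big|1-h(2-\eta^2)-\tfrac14h^2\big((2+\eta^2)^2-12\big)+\tfrac14h^3(\eta^6+3\eta^4-4)+\tfrac1{64}h^4(2+\eta^2)^4\Big|<1.$$ Then $\mu^{(2)}_n$ converges as $n\to\infty$ to a limit $\mu^{(2)}_\infty(h)$ (independent of $x_0$), and $\mu^{(2)}_\infty(h)=\frac{1}{2-\eta^2}+O(h)$ as $h\to0$.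
   Context: Here $\Delta W_n$ is independent of $x_0,\dots,x_n$. *)

theory Defs
  imports "HOL-Probability.Probability"
begin

definition heun_f :: "real \<Rightarrow> real" where
  "heun_f x = - x"

definition heun_g :: "real \<Rightarrow> real \<Rightarrow> real" where
  "heun_g \<eta> x = 1 + \<eta> * x"

definition heun_g' :: "real \<Rightarrow> real \<Rightarrow> real" where
  "heun_g' \<eta> x = \<eta>"

definition heun_F :: "real \<Rightarrow> real \<Rightarrow> real" where
  "heun_F \<eta> x = heun_f x - (1/2) * heun_g' \<eta> x * heun_g \<eta> x"

definition heun_step :: "real \<Rightarrow> real \<Rightarrow> real \<Rightarrow> real \<Rightarrow> real" where
  "heun_step \<eta> h x dW =
     (let F1 = heun_F \<eta> x; G1 = heun_g \<eta> x;
          y = x + F1 * h + G1 * dW;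
          F2 = heun_F \<eta> y; G2 = heun_g \<eta> y
      in x + (1/2) * (F1 + F2) * h + (1/2) * (G1 + G2) * dW)"

primrec heun_iter :: "real \<Rightarrow> real \<Rightarrow> real \<Rightarrow> (nat \<Rightarrow> 'a \<Rightarrow> real) \<Rightarrow> nat \<Rightarrow> 'a \<Rightarrow> real" where
  "heun_iter \<eta> h x0 dW 0 \<omega> = x0"
| "heun_iter \<eta> h x0 dW (Suc n) \<omega> = heun_step \<eta> h (heun_iter \<eta> h x0 dW n \<omega>) (dW n \<omega>)"

definition iid_gaussian_increments :: "'a measure \<Rightarrow> real \<Rightarrow> (nat \<Rightarrow> 'a \<Rightarrow> real) \<Rightarrow> bool" where
  "iid_gaussian_increments M h dW \<longleftrightarrow>
     prob_space M \<and>
     prob_space.indep_vars M (\<lambda>_. borel) dW UNIV \<and>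
     (\<forall>n. distributed M lborel (dW n) (\<lambda>x. ennreal (normal_density 0 (sqrt h) x)))"

definition heun_mu2 :: "'a measure \<Rightarrow> real \<Rightarrow> real \<Rightarrow> real \<Rightarrow> (nat \<Rightarrow> 'a \<Rightarrow> real) \<Rightarrow> nat \<Rightarrow> real" where
  "heun_mu2 M \<eta> h x0 dW n = prob_space.expectation M (\<lambda>\<omega>. (heun_iter \<eta> h x0 dW n \<omega>)\<^sup>2)"

definition heun_admissible :: "real \<Rightarrow> real \<Rightarrow> bool" where
  "heun_admissible \<eta> h \<longleftrightarrow>
     0 < h \<and> h < 8 / (2 + \<eta>\<^sup>2)\<^sup>2 \<and>
     \<bar>1 - h * (2 - \<eta>\<^sup>2) - (1/4) * h\<^sup>2 * ((2 + \<eta>\<^sup>2)\<^sup>2 - 12)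
        + (1/4) * h ^ 3 * (\<eta> ^ 6 + 3 * \<eta> ^ 4 - 4) + (1/64) * h ^ 4 * (2 + \<eta>\<^sup>2) ^ 4\<bar> < 1"

end

theory Submission
  imports Defs
begin

lemma (in prob_space) gauss_mom:
  assumes D: "distributed M lborel W (\<lambda>x. ennreal (normal_density 0 (sqrt h) x))" and h: "h > 0"
  shows "integrable M (\<lambda>\<omega>. W \<omega> ^ k)"
    and "k = 0 \<Longrightarrow> expectation (\<lambda>\<omega>. W \<omega> ^ k) = 1"
    and "k = 1 \<Longrightarrow> expectation (\<lambda>\<omega>. W \<omega> ^ k) = 0"
    and "k = 2 \<Longrightarrow> expectation (\<lambda>\<omega>. W \<omega> ^ k) = h"
    and "k = 3 \<Longrightarrow> expectation (\<lambda>\<omega>. W \<omega> ^ k) = 0"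
    and "k = 4 \<Longrightarrow> expectation (\<lambda>\<omega>. W \<omega> ^ k) = 3 * h^2"
proof -
  have s: "sqrt h > 0" using h by simp
  have I: "integrable lborel (\<lambda>x. normal_density 0 (sqrt h) x * x ^ k)" for k
    using integrable_normal_moment[of "sqrt h" 0 k] s by simp
  show "integrable M (\<lambda>\<omega>. W \<omega> ^ k)"
    using distributed_integrable[OF D, of "\<lambda>x. x ^ k"] I by simp
  have E: "expectation (\<lambda>\<omega>. W \<omega> ^ k) = (\<integral>x. normal_density 0 (sqrt h) x * x ^ k \<partial>lborel)" for k
    using distributed_integral[OF D, of "\<lambda>x. x ^ k"] by simp
  show "k = 0 \<Longrightarrow> expectation (\<lambda>\<omega>. W \<omega> ^ k) = 1" by (simp add: prob_space)
  show "k = 1 \<Longrightarrow> expectation (\<lambda>\<omega>. W \<omega> ^ k) = 0"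
    using E[of 1] integral_normal_moment_odd[OF s, where k=0 and \<mu>=0] by simp
  show "k = 3 \<Longrightarrow> expectation (\<lambda>\<omega>. W \<omega> ^ k) = 0"
    using E[of 3] integral_normal_moment_odd[OF s, where k=1 and \<mu>=0] by simp
  show "k = 2 \<Longrightarrow> expectation (\<lambda>\<omega>. W \<omega> ^ k) = h"
    using E[of 2] integral_normal_moment_even[OF s, where k=1 and \<mu>=0] h by simp
  show "k = 4 \<Longrightarrow> expectation (\<lambda>\<omega>. W \<omega> ^ k) = 3 * h^2"
    using E[of 4] integral_normal_moment_even[OF s, where k=2 and \<mu>=0] h
    by (simp add: fact_numeral power2_eq_square field_simps)
qed

lemma (in prob_space) gauss_poly:
  assumes D: "distributed M lborel W (\<lambda>x. ennreal (normal_density 0 (sqrt h) x))" and h: "h > 0"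
  shows "integrable M (\<lambda>\<omega>. c0 + c1 * W \<omega> + c2 * (W \<omega>)^2 + c3 * (W \<omega>)^3 + c4 * (W \<omega>)^4)"
    and "expectation (\<lambda>\<omega>. c0 + c1 * W \<omega> + c2 * (W \<omega>)^2 + c3 * (W \<omega>)^3 + c4 * (W \<omega>)^4)
         = c0 + c2 * h + 3 * c4 * h^2"
proof -
  note I = gauss_mom(1)[OF D h]
  have I1: "integrable M W" using I[of 1] by simp
  show "integrable M (\<lambda>\<omega>. c0 + c1 * W \<omega> + c2 * (W \<omega>)^2 + c3 * (W \<omega>)^3 + c4 * (W \<omega>)^4)"
  proof -
    have a: "integrable M (\<lambda>\<omega>. c * (W \<omega>)^k)" for c k using I by (rule integrable_mult_right)
    have b: "integrable M (\<lambda>\<omega>. c * W \<omega>)" for c using I1 by (rule integrable_mult_right)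
    have c: "integrable M (\<lambda>\<omega>. c0)" by simp
    show ?thesis by (intro Bochner_Integration.integrable_add a b c)
  qed
  have E1: "expectation W = 0" using gauss_mom(3)[OF D h, of 1] by simp
  show "expectation (\<lambda>\<omega>. c0 + c1 * W \<omega> + c2 * (W \<omega>)^2 + c3 * (W \<omega>)^3 + c4 * (W \<omega>)^4)
         = c0 + c2 * h + 3 * c4 * h^2"
    using I I1 E1 gauss_mom(4,5,6)[OF D h]
    by (simp add: integrable_add integrable_mult_right prob_space)
qed

definition hc :: "real \<Rightarrow> real \<Rightarrow> real \<Rightarrow> real" where
  "hc \<eta> h w = (\<eta> * w - (1 + \<eta>^2 / 2) * h) / 2"
definition hA :: "real \<Rightarrow> real \<Rightarrow> real \<Rightarrow> real" where
  "hA \<eta> h w = 1 + 2 * hc \<eta> h w + 2 * (hc \<eta> h w)^2"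
definition hB :: "real \<Rightarrow> real \<Rightarrow> real \<Rightarrow> real" where
  "hB \<eta> h w = (1 + hc \<eta> h w) * (w - h * \<eta> / 2)"

lemma step_eq: "heun_step \<eta> h x w = hA \<eta> h w * x + hB \<eta> h w"
  unfolding heun_step_def hA_def hB_def hc_def heun_F_def heun_f_def heun_g_def heun_g'_def Let_def
  by (simp add: field_simps power2_eq_square)

definition EA :: "real \<Rightarrow> real \<Rightarrow> real" where
  "EA \<eta> h = (1 - h + (1/2) * h ^ 2 + (1/2) * h ^ 2 * \<eta> ^ 2 + (1/8) * h ^ 2 * \<eta> ^ 4)"

definition EB :: "real \<Rightarrow> real \<Rightarrow> real" where
  "EB \<eta> h = ((1/4) * h ^ 2 * \<eta> + (1/8) * h ^ 2 * \<eta> ^ 3)"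

definition EA2 :: "real \<Rightarrow> real \<Rightarrow> real" where
  "EA2 \<eta> h = (1 - 2 * h + h * \<eta> ^ 2 + 2 * h ^ 2 - h ^ 2 * \<eta> ^ 2 - (1/4) * h ^ 2 * \<eta> ^ 4 - h ^ 3 + (3/4) * h ^ 3 * \<eta> ^ 4 + (1/4) * h ^ 3 * \<eta> ^ 6 + (1/4) * h ^ 4 + (1/2) * h ^ 4 * \<eta> ^ 2 + (3/8) * h ^ 4 * \<eta> ^ 4 + (1/8) * h ^ 4 * \<eta> ^ 6 + (1/64) * h ^ 4 * \<eta> ^ 8)"

definition EAB2 :: "real \<Rightarrow> real \<Rightarrow> real" where
  "EAB2 \<eta> h = (2 * h * \<eta> - (5/2) * h ^ 2 * \<eta> - (3/4) * h ^ 2 * \<eta> ^ 3 + (1/2) * h ^ 3 * \<eta> + (5/4) * h ^ 3 * \<eta> ^ 3 + (1/2) * h ^ 3 * \<eta> ^ 5 + (1/4) * h ^ 4 * \<eta> + (3/8) * h ^ 4 * \<eta> ^ 3 + (3/16) * h ^ 4 * \<eta> ^ 5 + (1/32) * h ^ 4 * \<eta> ^ 7)"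

definition EB2 :: "real \<Rightarrow> real \<Rightarrow> real" where
  "EB2 \<eta> h = (h - h ^ 2 - (1/2) * h ^ 2 * \<eta> ^ 2 + (1/4) * h ^ 3 + (1/2) * h ^ 3 * \<eta> ^ 2 + (1/4) * h ^ 3 * \<eta> ^ 4 + (1/16) * h ^ 4 * \<eta> ^ 2 + (1/16) * h ^ 4 * \<eta> ^ 4 + (1/64) * h ^ 4 * \<eta> ^ 6)"

lemma poly_A: "hA \<eta> h w = (1 - h - (1/2) * h * \<eta> ^ 2 + (1/2) * h ^ 2 + (1/2) * h ^ 2 * \<eta> ^ 2 + (1/8) * h ^ 2 * \<eta> ^ 4) + (\<eta> - h * \<eta> - (1/2) * h * \<eta> ^ 3) * w + ((1/2) * \<eta> ^ 2) * w^2 + 0 * w^3 + 0 * w^4"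
  unfolding hA_def hB_def hc_def by (simp add: field_simps; algebra)

lemma poly_B: "hB \<eta> h w = (- (1/2) * h * \<eta> + (1/4) * h ^ 2 * \<eta> + (1/8) * h ^ 2 * \<eta> ^ 3) + (1 - (1/2) * h - (1/2) * h * \<eta> ^ 2) * w + ((1/2) * \<eta>) * w^2 + 0 * w^3 + 0 * w^4"
  unfolding hA_def hB_def hc_def by (simp add: field_simps; algebra)

lemma poly_AA: "(hA \<eta> h w)^2 = (1 - 2 * h - h * \<eta> ^ 2 + 2 * h ^ 2 + 2 * h ^ 2 * \<eta> ^ 2 + (1/2) * h ^ 2 * \<eta> ^ 4 - h ^ 3 - (3/2) * h ^ 3 * \<eta> ^ 2 - (3/4) * h ^ 3 * \<eta> ^ 4 - (1/8) * h ^ 3 * \<eta> ^ 6 + (1/4) * h ^ 4 + (1/2) * h ^ 4 * \<eta> ^ 2 + (3/8) * h ^ 4 * \<eta> ^ 4 + (1/8) * h ^ 4 * \<eta> ^ 6 + (1/64) * h ^ 4 * \<eta> ^ 8) + (2 * \<eta> - 4 * h * \<eta> - 2 * h * \<eta> ^ 3 + 3 * h ^ 2 * \<eta> + 3 * h ^ 2 * \<eta> ^ 3 + (3/4) * h ^ 2 * \<eta> ^ 5 - h ^ 3 * \<eta> - (3/2) * h ^ 3 * \<eta> ^ 3 - (3/4) * h ^ 3 * \<eta> ^ 5 - (1/8) * h ^ 3 * \<eta> ^ 7) * w + (2 * \<eta> ^ 2 - 3 * h * \<eta> ^ 2 - (3/2) * h * \<eta> ^ 4 + (3/2) * h ^ 2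 * \<eta> ^ 2 + (3/2) * h ^ 2 * \<eta> ^ 4 + (3/8) * h ^ 2 * \<eta> ^ 6) * w^2 + (\<eta> ^ 3 - h * \<eta> ^ 3 - (1/2) * h * \<eta> ^ 5) * w^3 + ((1/4) * \<eta> ^ 4) * w^4"
  unfolding hA_def hB_def hc_def by (simp add: field_simps; algebra)

lemma poly_AB: "2 * (hA \<eta> h w * hB \<eta> h w) = (- h * \<eta> + (3/2) * h ^ 2 * \<eta> + (3/4) * h ^ 2 * \<eta> ^ 3 - h ^ 3 * \<eta> - h ^ 3 * \<eta> ^ 3 - (1/4) * h ^ 3 * \<eta> ^ 5 + (1/4) * h ^ 4 * \<eta> + (3/8) * h ^ 4 * \<eta> ^ 3 + (3/16) * h ^ 4 * \<eta> ^ 5 + (1/32) * h ^ 4 * \<eta> ^ 7) + (2 - 3 * h - 3 * h * \<eta> ^ 2 + 2 * h ^ 2 + 4 * h ^ 2 * \<eta> ^ 2 + (3/2) * h ^ 2 * \<eta> ^ 4 - (1/2) * h ^ 3 - (3/2) * h ^ 3 * \<eta> ^ 2 - (9/8) * h ^ 3 * \<eta> ^ 4 - (1/4) * h ^ 3 * \<eta> ^ 6) * w + (3 * \<eta> - 4 * h * \<eta> - 3 * h * \<eta> ^ 3 + (3/2) * h ^ 2 * \<eta> + (9/4) * h ^ 2 * \<eta> ^ 3 + (3/4) * h ^ 2 * \<eta> ^ 5) * w^2 + (2 * \<eta> ^ 2 - (3/2) * h * \<eta> ^ 2 - h * \<eta> ^ 4) * w^3 + ((1/2) * \<eta> ^ 3)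 * w^4"
  unfolding hA_def hB_def hc_def by (simp add: field_simps; algebra)

lemma poly_BB: "(hB \<eta> h w)^2 = ((1/4) * h ^ 2 * \<eta> ^ 2 - (1/4) * h ^ 3 * \<eta> ^ 2 - (1/8) * h ^ 3 * \<eta> ^ 4 + (1/16) * h ^ 4 * \<eta> ^ 2 + (1/16) * h ^ 4 * \<eta> ^ 4 + (1/64) * h ^ 4 * \<eta> ^ 6) + (- h * \<eta> + h ^ 2 * \<eta> + (3/4) * h ^ 2 * \<eta> ^ 3 - (1/4) * h ^ 3 * \<eta> - (3/8) * h ^ 3 * \<eta> ^ 3 - (1/8) * h ^ 3 * \<eta> ^ 5) * w + (1 - h - (3/2) * h * \<eta> ^ 2 + (1/4) * h ^ 2 + (3/4) * h ^ 2 * \<eta> ^ 2 + (3/8) * h ^ 2 * \<eta> ^ 4) * w^2 + (\<eta> - (1/2) * h * \<eta> - (1/2) * h * \<eta> ^ 3) * w^3 + ((1/4) * \<eta> ^ 2) * w^4"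
  unfolding hA_def hB_def hc_def by (simp add: field_simps; algebra)

lemma hA_meas[measurable]: "hA \<eta> h \<in> borel_measurable borel"
  unfolding hA_def[abs_def] hc_def by measurable
lemma hB_meas[measurable]: "hB \<eta> h \<in> borel_measurable borel"
  unfolding hB_def[abs_def] hc_def by measurable

lemma iter_Suc': "heun_iter \<eta> h x0 dW (Suc n) \<omega> = hA \<eta> h (dW n \<omega>) * heun_iter \<eta> h x0 dW n \<omega> + hB \<eta> h (dW n \<omega>)"
  by (simp add: step_eq)

lemma iter_meas:
  "n \<le> m \<Longrightarrow> (\<lambda>f. heun_iter \<eta> h x0 (\<lambda>i f. f i) n f) \<in> borel_measurable (PiM {..<m} (\<lambda>_. borel))"
proof (induction n)
  case 0
  then show ?case by simp
next
  case (Suc n)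
  have c: "(\<lambda>f. f n) \<in> borel_measurable (PiM {..<m} (\<lambda>_. borel))"
    using Suc.prems by (intro measurable_component_singleton) auto
  have "(\<lambda>f. hA \<eta> h (f n) * heun_iter \<eta> h x0 (\<lambda>i f. f i) n f + hB \<eta> h (f n)) \<in> borel_measurable (PiM {..<m} (\<lambda>_. borel))"
    using Suc by (intro borel_measurable_add borel_measurable_times measurable_compose[OF c hA_meas]
        measurable_compose[OF c hB_meas]) auto
  then show ?case by (simp only: iter_Suc')
qed

lemma iter_restrict:
  "n \<le> m \<Longrightarrow> heun_iter \<eta> h x0 dW n \<omega> = heun_iter \<eta> h x0 (\<lambda>i f. f i) n (restrict (\<lambda>i. dW i \<omega>) {..<m})"
  by (induction n) auto

lemma (in prob_space) gpoly':
  assumes D: "distributed M lborel W (\<lambda>x. ennreal (normal_density 0 (sqrt h) x))" and h: "h > 0"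
    and f: "\<And>w. f w = c0 + c1 * w + c2 * w^2 + c3 * w^3 + c4 * w^4"
  shows "integrable M (\<lambda>\<omega>. f (W \<omega>))" "expectation (\<lambda>\<omega>. f (W \<omega>)) = c0 + c2 * h + 3 * c4 * h^2"
  using gauss_poly[OF D h, of c0 c1 c2 c3 c4] by (simp_all add: f)

lemma (in prob_space) main_ind:
  assumes ind: "indep_vars (\<lambda>_. borel) dW UNIV"
    and D: "\<And>n. distributed M lborel (dW n) (\<lambda>x. ennreal (normal_density 0 (sqrt h) x))"
    and h: "h > 0"
  shows "random_variable borel (heun_iter \<eta> h x0 dW n) \<and> integrable M (heun_iter \<eta> h x0 dW n)
     \<and> integrable M (\<lambda>\<omega>. (heun_iter \<eta> h x0 dW n \<omega>)^2)
     \<and> expectation (heun_iter \<eta> h x0 dW (Suc n)) = EA \<eta> h * expectation (heun_iter \<eta> h x0 dW n) + EB \<eta> h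
     \<and> expectation (\<lambda>\<omega>. (heun_iter \<eta> h x0 dW (Suc n) \<omega>)^2) =
         EA2 \<eta> h * expectation (\<lambda>\<omega>. (heun_iter \<eta> h x0 dW n \<omega>)^2)
         + EAB2 \<eta> h * expectation (heun_iter \<eta> h x0 dW n) + EB2 \<eta> h"
proof -
  define X where "X = heun_iter \<eta> h x0 dW"
  have rvW: "random_variable borel (dW i)" for i
    using distributed_measurable[OF D[of i]] by simp
  have rvX: "random_variable borel (X n)" for n
  proof (induction n)
    case 0 then show ?case by (simp add: X_def)
  next
    case (Suc n)
    have "(\<lambda>\<omega>. hA \<eta> h (dW n \<omega>) * X n \<omega> + hB \<eta> h (dW n \<omega>)) \<in> borel_measurable M"
      using Suc by (intro borel_measurable_add borel_measurable_times measurable_compose[OF rvW hA_meas]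
        measurable_compose[OF rvW hB_meas]) auto
    then show ?case by (simp only: X_def iter_Suc')
  qed
  have indX: "indep_var borel (X n) borel (dW n)" for n
  proof -
    have "indep_var (PiM {..<n} (\<lambda>_. borel)) (\<lambda>\<omega>. restrict (\<lambda>i. dW i \<omega>) {..<n})
            (PiM {n} (\<lambda>_. borel)) (\<lambda>\<omega>. restrict (\<lambda>i. dW i \<omega>) {n})"
      by (rule indep_var_restrict[OF ind]) auto
    from indep_var_compose[OF this iter_meas[OF order_refl] measurable_component_singleton[of n "{n}" "\<lambda>_. borel"]]
    have "indep_var borel ((\<lambda>f. heun_iter \<eta> h x0 (\<lambda>i f. f i) n f) \<circ> (\<lambda>\<omega>. restrict (\<lambda>i. dW i \<omega>) {..<n}))
            borel ((\<lambda>f. f n) \<circ> (\<lambda>\<omega>. restrict (\<lambda>i. dW i \<omega>) {n}))" by auto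
    moreover have "(\<lambda>f. heun_iter \<eta> h x0 (\<lambda>i f. f i) n f) \<circ> (\<lambda>\<omega>. restrict (\<lambda>i. dW i \<omega>) {..<n}) = X n"
      by (rule ext) (simp add: X_def iter_restrict[of n n \<eta> h x0 dW])
    moreover have "(\<lambda>f. f n) \<circ> (\<lambda>\<omega>. restrict (\<lambda>i. dW i \<omega>) {n}) = dW n"
      by (rule ext) simp
    ultimately show ?thesis by simp
  qed
  have indF: "indep_var borel (\<lambda>\<omega>. \<phi> (X n \<omega>)) borel (\<lambda>\<omega>. \<psi> (dW n \<omega>))"
    if "\<phi> \<in> borel_measurable borel" "\<psi> \<in> borel_measurable borel" for \<phi> \<psi> n
    using indep_var_compose[OF indX[of n] that] by (simp add: comp_def)
  have gA: "integrable M (\<lambda>\<omega>. hA \<eta> h (dW n \<omega>))" "expectation (\<lambda>\<omega>. hA \<eta> h (dW n \<omega>)) = EA \<eta> h" for n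
  proof -
    note g = gpoly'[OF D[of n] h poly_A[where \<eta>=\<eta> and h=h]]
    show "integrable M (\<lambda>\<omega>. hA \<eta> h (dW n \<omega>))" by (rule g(1))
    show "expectation (\<lambda>\<omega>. hA \<eta> h (dW n \<omega>)) = EA \<eta> h" using g(2) unfolding EA_def by algebra
  qed
  have gB: "integrable M (\<lambda>\<omega>. hB \<eta> h (dW n \<omega>))" "expectation (\<lambda>\<omega>. hB \<eta> h (dW n \<omega>)) = EB \<eta> h" for n
  proof -
    note g = gpoly'[OF D[of n] h poly_B[where \<eta>=\<eta> and h=h]]
    show "integrable M (\<lambda>\<omega>. hB \<eta> h (dW n \<omega>))" by (rule g(1))
    show "expectation (\<lambda>\<omega>. hB \<eta> h (dW n \<omega>)) = EB \<eta> h" using g(2) unfolding EB_def by algebra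
  qed
  have gAA: "integrable M (\<lambda>\<omega>. (hA \<eta> h (dW n \<omega>))^2)" "expectation (\<lambda>\<omega>. (hA \<eta> h (dW n \<omega>))^2) = EA2 \<eta> h" for n
  proof -
    note g = gpoly'[OF D[of n] h, where f="\<lambda>w. (hA \<eta> h w)^2", OF poly_AA[where \<eta>=\<eta> and h=h]]
    show "integrable M (\<lambda>\<omega>. (hA \<eta> h (dW n \<omega>))^2)" by (rule g(1))
    show "expectation (\<lambda>\<omega>. (hA \<eta> h (dW n \<omega>))^2) = EA2 \<eta> h" using g(2) unfolding EA2_def by algebra
  qed
  have gAB: "integrable M (\<lambda>\<omega>. 2 * (hA \<eta> h (dW n \<omega>) * hB \<eta> h (dW n \<omega>)))"
     "expectation (\<lambda>\<omega>. 2 * (hA \<eta> h (dW n \<omega>) * hB \<eta> h (dW n \<omega>))) = EAB2 \<eta> h" for n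
  proof -
    note g = gpoly'[OF D[of n] h, where f="\<lambda>w. 2 * (hA \<eta> h w * hB \<eta> h w)", OF poly_AB[where \<eta>=\<eta> and h=h]]
    show "integrable M (\<lambda>\<omega>. 2 * (hA \<eta> h (dW n \<omega>) * hB \<eta> h (dW n \<omega>)))" by (rule g(1))
    show "expectation (\<lambda>\<omega>. 2 * (hA \<eta> h (dW n \<omega>) * hB \<eta> h (dW n \<omega>))) = EAB2 \<eta> h" using g(2) unfolding EAB2_def by algebra
  qed
  have gBB: "integrable M (\<lambda>\<omega>. (hB \<eta> h (dW n \<omega>))^2)" "expectation (\<lambda>\<omega>. (hB \<eta> h (dW n \<omega>))^2) = EB2 \<eta> h" for n
  proof -
    note g = gpoly'[OF D[of n] h, where f="\<lambda>w. (hB \<eta> h w)^2", OF poly_BB[where \<eta>=\<eta> and h=h]]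
    show "integrable M (\<lambda>\<omega>. (hB \<eta> h (dW n \<omega>))^2)" by (rule g(1))
    show "expectation (\<lambda>\<omega>. (hB \<eta> h (dW n \<omega>))^2) = EB2 \<eta> h" using g(2) unfolding EB2_def by algebra
  qed
  have IH: "integrable M (X n) \<and> integrable M (\<lambda>\<omega>. (X n \<omega>)^2)" for n
  proof (induction n)
    case 0 then show ?case by (simp add: X_def)
  next
    case (Suc n)
    have i1: "indep_var borel (\<lambda>\<omega>. X n \<omega>) borel (\<lambda>\<omega>. hA \<eta> h (dW n \<omega>))"
      using indF[of "\<lambda>x. x" "hA \<eta> h" n] by simp
    have i2: "indep_var borel (\<lambda>\<omega>. (X n \<omega>)^2) borel (\<lambda>\<omega>. (hA \<eta> h (dW n \<omega>))^2)"
      using indF[of "\<lambda>x. x^2" "\<lambda>w. (hA \<eta> h w)^2" n] by simp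
    have i3: "indep_var borel (\<lambda>\<omega>. X n \<omega>) borel (\<lambda>\<omega>. 2 * (hA \<eta> h (dW n \<omega>) * hB \<eta> h (dW n \<omega>)))"
      using indF[of "\<lambda>x. x" "\<lambda>w. 2 * (hA \<eta> h w * hB \<eta> h w)" n] by simp
    have a: "integrable M (\<lambda>\<omega>. X n \<omega> * hA \<eta> h (dW n \<omega>))"
      using indep_var_integrable[OF i1] Suc gA by simp
    have b: "integrable M (\<lambda>\<omega>. (X n \<omega>)^2 * (hA \<eta> h (dW n \<omega>))^2)"
      using indep_var_integrable[OF i2] Suc gAA by simp
    have c: "integrable M (\<lambda>\<omega>. X n \<omega> * (2 * (hA \<eta> h (dW n \<omega>) * hB \<eta> h (dW n \<omega>))))"
      using indep_var_integrable[OF i3] Suc gAB by simp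
    have e1: "X (Suc n) = (\<lambda>\<omega>. X n \<omega> * hA \<eta> h (dW n \<omega>) + hB \<eta> h (dW n \<omega>))"
      by (rule ext) (simp add: X_def step_eq mult.commute)
    have e2: "(\<lambda>\<omega>. (X (Suc n) \<omega>)^2) = (\<lambda>\<omega>. (X n \<omega>)^2 * (hA \<eta> h (dW n \<omega>))^2
        + X n \<omega> * (2 * (hA \<eta> h (dW n \<omega>) * hB \<eta> h (dW n \<omega>))) + (hB \<eta> h (dW n \<omega>))^2)"
      by (rule ext) (simp add: e1 power2_eq_square algebra_simps)
    have "integrable M (X (Suc n))" unfolding e1
      using a gB by (intro Bochner_Integration.integrable_add) auto
    moreover have "integrable M (\<lambda>\<omega>. (X (Suc n) \<omega>)^2)" unfolding e2
      using a b c gB gBB by (intro Bochner_Integration.integrable_add) auto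
    ultimately show ?case by simp
  qed
  show ?thesis
  proof (intro conjI)
    show "random_variable borel (heun_iter \<eta> h x0 dW n)" using rvX by (simp add: X_def)
    show "integrable M (heun_iter \<eta> h x0 dW n)" using IH by (simp add: X_def)
    show "integrable M (\<lambda>\<omega>. (heun_iter \<eta> h x0 dW n \<omega>)\<^sup>2)" using IH by (simp add: X_def)
    have i1: "indep_var borel (\<lambda>\<omega>. X n \<omega>) borel (\<lambda>\<omega>. hA \<eta> h (dW n \<omega>))"
      using indF[of "\<lambda>x. x" "hA \<eta> h" n] by simp
    have i2: "indep_var borel (\<lambda>\<omega>. (X n \<omega>)^2) borel (\<lambda>\<omega>. (hA \<eta> h (dW n \<omega>))^2)"
      using indF[of "\<lambda>x. x^2" "\<lambda>w. (hA \<eta> h w)^2" n] by simp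
    have i3: "indep_var borel (\<lambda>\<omega>. X n \<omega>) borel (\<lambda>\<omega>. 2 * (hA \<eta> h (dW n \<omega>) * hB \<eta> h (dW n \<omega>)))"
      using indF[of "\<lambda>x. x" "\<lambda>w. 2 * (hA \<eta> h w * hB \<eta> h w)" n] by simp
    have a: "integrable M (\<lambda>\<omega>. X n \<omega> * hA \<eta> h (dW n \<omega>))"
      using indep_var_integrable[OF i1] IH gA by simp
    have b: "integrable M (\<lambda>\<omega>. (X n \<omega>)^2 * (hA \<eta> h (dW n \<omega>))^2)"
      using indep_var_integrable[OF i2] IH gAA by simp
    have c: "integrable M (\<lambda>\<omega>. X n \<omega> * (2 * (hA \<eta> h (dW n \<omega>) * hB \<eta> h (dW n \<omega>))))"
      using indep_var_integrable[OF i3] IH gAB by simp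
    have ea: "expectation (\<lambda>\<omega>. X n \<omega> * hA \<eta> h (dW n \<omega>)) = expectation (X n) * EA \<eta> h"
      using indep_var_lebesgue_integral[OF i1] IH gA by simp
    have eb: "expectation (\<lambda>\<omega>. (X n \<omega>)^2 * (hA \<eta> h (dW n \<omega>))^2) = expectation (\<lambda>\<omega>. (X n \<omega>)^2) * EA2 \<eta> h"
      using indep_var_lebesgue_integral[OF i2] IH gAA by simp
    have ec: "expectation (\<lambda>\<omega>. X n \<omega> * (2 * (hA \<eta> h (dW n \<omega>) * hB \<eta> h (dW n \<omega>)))) = expectation (X n) * EAB2 \<eta> h"
      using indep_var_lebesgue_integral[OF i3] IH gAB by simp
    have e1: "X (Suc n) = (\<lambda>\<omega>. X n \<omega> * hA \<eta> h (dW n \<omega>) + hB \<eta> h (dW n \<omega>))"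
      by (rule ext) (simp add: X_def step_eq mult.commute)
    have e2: "(\<lambda>\<omega>. (X (Suc n) \<omega>)^2) = (\<lambda>\<omega>. (X n \<omega>)^2 * (hA \<eta> h (dW n \<omega>))^2
        + X n \<omega> * (2 * (hA \<eta> h (dW n \<omega>) * hB \<eta> h (dW n \<omega>))) + (hB \<eta> h (dW n \<omega>))^2)"
      by (rule ext) (simp add: e1 power2_eq_square algebra_simps)
    have "expectation (X (Suc n)) = EA \<eta> h * expectation (X n) + EB \<eta> h"
      unfolding e1 using a gB ea by (simp add: mult.commute)
    then show "expectation (heun_iter \<eta> h x0 dW (Suc n)) = EA \<eta> h * expectation (heun_iter \<eta> h x0 dW n) + EB \<eta> h"
      by (simp add: X_def)
    have "expectation (\<lambda>\<omega>. (X (Suc n) \<omega>)^2) = EA2 \<eta> h * expectation (\<lambda>\<omega>. (X n \<omega>)^2)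
         + EAB2 \<eta> h * expectation (X n) + EB2 \<eta> h"
      unfolding e2 using a b c gBB eb ec by (simp add: mult.commute)
    then show "expectation (\<lambda>\<omega>. (heun_iter \<eta> h x0 dW (Suc n) \<omega>)^2) =
         EA2 \<eta> h * expectation (\<lambda>\<omega>. (heun_iter \<eta> h x0 dW n \<omega>)^2)
         + EAB2 \<eta> h * expectation (heun_iter \<eta> h x0 dW n) + EB2 \<eta> h"
      by (simp add: X_def)
  qed
qed

lemma affine_conv:
  fixes u s :: "nat \<Rightarrow> real"
  assumes r: "\<bar>r\<bar> < 1" and s: "s \<longlonglongrightarrow> t" and rec: "\<And>n. u (Suc n) = r * u n + s n"
  shows "u \<longlonglongrightarrow> t / (1 - r)"
proof -
  define c where "c = t / (1 - r)"
  define e where "e n = u n - c" for n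
  have ct: "c = r * c + t" using r by (simp add: c_def field_simps)
  have erec: "e (Suc n) = r * e n + (s n - t)" for n
  proof -
    have "e (Suc n) = r * e n + (s n - t) + (r * c + t - c)" by (simp add: e_def rec algebra_simps)
    then show ?thesis using ct by linarith
  qed
  define q where "q = \<bar>r\<bar>"
  have q0: "0 \<le> q" and q1: "q < 1" using r by (auto simp: q_def)
  have d: "(\<lambda>n. s n - t) \<longlonglongrightarrow> 0" using s by (simp add: LIM_zero)
  have "e \<longlonglongrightarrow> 0"
  proof (rule LIMSEQ_I)
    fix \<epsilon> :: real assume \<epsilon>: "0 < \<epsilon>"
    have "0 < \<epsilon> * (1 - q) / 2" using \<epsilon> q1 by simp
    from LIMSEQ_D[OF d this] obtain N where N: "\<And>n. n \<ge> N \<Longrightarrow> \<bar>s n - t\<bar> < \<epsilon> * (1 - q) / 2"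
      by auto
    have bound: "\<bar>e (N + k)\<bar> \<le> q ^ k * \<bar>e N\<bar> + \<epsilon> / 2" for k
    proof (induction k)
      case 0 then show ?case using \<epsilon> by simp
    next
      case (Suc k)
      have "\<bar>e (N + Suc k)\<bar> \<le> q * \<bar>e (N + k)\<bar> + \<bar>s (N + k) - t\<bar>"
        using erec[of "N + k"] by (simp add: q_def abs_mult[symmetric] abs_triangle_ineq)
      also have "q * \<bar>e (N + k)\<bar> \<le> q * (q ^ k * \<bar>e N\<bar> + \<epsilon> / 2)"
        using Suc.IH q0 by (simp add: mult_left_mono)
      finally have "\<bar>e (N + Suc k)\<bar> \<le> q * (q ^ k * \<bar>e N\<bar> + \<epsilon> / 2) + \<bar>s (N + k) - t\<bar>"
        by simp
      moreover have "\<bar>s (N + k) - t\<bar> < \<epsilon> * (1 - q) / 2" using N by simp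
      ultimately show ?case by (simp add: algebra_simps)
    qed
    have "(\<lambda>k. q ^ k * \<bar>e N\<bar>) \<longlonglongrightarrow> 0"
      using q0 q1 by (intro tendsto_mult_left_zero LIMSEQ_power_zero) simp
    from LIMSEQ_D[OF this, of "\<epsilon> / 2"] \<epsilon> obtain K where K: "\<And>k. k \<ge> K \<Longrightarrow> \<bar>q ^ k * \<bar>e N\<bar>\<bar> < \<epsilon> / 2"
      by auto
    show "\<exists>no. \<forall>n\<ge>no. norm (e n - 0) < \<epsilon>"
    proof (intro exI allI impI)
      fix n assume n: "N + K \<le> n"
      define k where "k = n - N"
      have nk: "n = N + k" and kK: "k \<ge> K" using n by (auto simp: k_def)
      have "\<bar>e n\<bar> \<le> q ^ k * \<bar>e N\<bar> + \<epsilon> / 2" using bound[of k] nk by simp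
      moreover have "q ^ k * \<bar>e N\<bar> < \<epsilon> / 2" using K[OF kK] by simp
      ultimately show "norm (e n - 0) < \<epsilon>" by simp
    qed
  qed
  then have "(\<lambda>n. e n + c) \<longlonglongrightarrow> 0 + c" by (intro tendsto_add) auto
  then show ?thesis by (simp add: e_def c_def)
qed

lemma EA_alt: "EA \<eta> h = 1 - h + h^2 * (2 + \<eta>^2)^2 / 8"
  unfolding EA_def by (simp add: field_simps; algebra)

lemma EA2_alt: "EA2 \<eta> h = 1 - h * (2 - \<eta>\<^sup>2) - (1/4) * h\<^sup>2 * ((2 + \<eta>\<^sup>2)\<^sup>2 - 12)
        + (1/4) * h ^ 3 * (\<eta> ^ 6 + 3 * \<eta> ^ 4 - 4) + (1/64) * h ^ 4 * (2 + \<eta>\<^sup>2) ^ 4"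
  unfolding EA2_def by (simp add: field_simps; algebra)

lemma EA_bound:
  assumes "heun_admissible \<eta> h" shows "\<bar>EA \<eta> h\<bar> < 1"
proof -
  have h: "0 < h" and hb: "h < 8 / (2 + \<eta>\<^sup>2)\<^sup>2" using assms by (auto simp: heun_admissible_def)
  have p2: "0 < 2 + \<eta>\<^sup>2" using zero_le_power2[of \<eta>] by linarith
  have pos: "(2 + \<eta>\<^sup>2)\<^sup>2 > 0" using p2 by simp
  have a: "h * (2 + \<eta>\<^sup>2)\<^sup>2 < 8" using hb pos by (simp add: pos_less_divide_eq)
  have g4: "(2 + \<eta>\<^sup>2)\<^sup>2 \<ge> 4"
  proof -
    have "2 \<le> 2 + \<eta>\<^sup>2" by simp
    then have "2^2 \<le> (2 + \<eta>\<^sup>2)\<^sup>2" by (rule power_mono) simp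
    then show ?thesis by simp
  qed
  have "h^2 * (2 + \<eta>^2)^2 / 8 < h"
  proof -
    have "h * (h * (2 + \<eta>\<^sup>2)\<^sup>2) < h * 8" using a h by simp
    then show ?thesis by (simp add: power2_eq_square algebra_simps)
  qed
  moreover have "h^2 * (2 + \<eta>^2)^2 \<ge> h^2 * 4" using g4 by (simp add: mult_left_mono)
  moreover have "h^2 * 4 / 8 - h + 2 > 0"
  proof -
    have "h^2 * 4 / 8 - h + 2 = ((h - 1)^2 + 3) / 2" by (simp add: power2_eq_square algebra_simps)
    also have "\<dots> > 0" by (simp add: add_nonneg_pos)
    finally show ?thesis .
  qed
  ultimately show ?thesis unfolding EA_alt by (simp add: abs_less_iff) 
qed

lemma EA2_bound: "heun_admissible \<eta> h \<Longrightarrow> \<bar>EA2 \<eta> h\<bar> < 1"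
  unfolding EA2_alt heun_admissible_def by simp

definition rr :: "real \<Rightarrow> real \<Rightarrow> real" where
  "rr \<eta> h = (2 * \<eta> - (5/2) * h * \<eta> - (3/4) * h * \<eta> ^ 3 + (1/2) * h ^ 2 * \<eta> + (5/4) * h ^ 2 * \<eta> ^ 3 + (1/2) * h ^ 2 * \<eta> ^ 5 + (1/4) * h ^ 3 * \<eta> + (3/8) * h ^ 3 * \<eta> ^ 3 + (3/16) * h ^ 3 * \<eta> ^ 5 + (1/32) * h ^ 3 * \<eta> ^ 7)"

definition qq :: "real \<Rightarrow> real \<Rightarrow> real" where
  "qq \<eta> h = (- 1 - (1/2) * \<eta> ^ 2 + (1/4) * h + (1/2) * h * \<eta> ^ 2 + (1/4) * h * \<eta> ^ 4 + (1/16) * h ^ 2 * \<eta> ^ 2 + (1/16) * h ^ 2 * \<eta> ^ 4 + (1/64) * h ^ 2 * \<eta> ^ 6)"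

definition pp :: "real \<Rightarrow> real \<Rightarrow> real" where
  "pp \<eta> h = (2 - \<eta> ^ 2 - (1/4) * \<eta> ^ 4 - h + (3/4) * h * \<eta> ^ 4 + (1/4) * h * \<eta> ^ 6 + (1/4) * h ^ 2 + (1/2) * h ^ 2 * \<eta> ^ 2 + (3/8) * h ^ 2 * \<eta> ^ 4 + (1/8) * h ^ 2 * \<eta> ^ 6 + (1/64) * h ^ 2 * \<eta> ^ 8)"

lemma fac_EAB2: "EAB2 \<eta> h = h * rr \<eta> h"
  unfolding EAB2_def rr_def by (simp add: field_simps; algebra)
lemma fac_EB2: "EB2 \<eta> h = h * (1 + h * qq \<eta> h)"
  unfolding EB2_def qq_def by (simp add: field_simps; algebra)
lemma fac_EA2: "EA2 \<eta> h = 1 - h * ((2 - \<eta>^2) - h * pp \<eta> h)"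
  unfolding EA2_def pp_def by (simp add: field_simps; algebra)
lemma fac_EA: "EA \<eta> h = 1 - h * (1 - ((2 + \<eta>^2)^2 / 8) * h)"
  unfolding EA_def by (simp add: field_simps; algebra)
lemma fac_EB: "EB \<eta> h = h^2 * (\<eta> / 4 + \<eta>^3 / 8)"
  unfolding EB_def by (simp add: field_simps; algebra)

definition Lim2 :: "real \<Rightarrow> real \<Rightarrow> real" where
  "Lim2 \<eta> h = (EAB2 \<eta> h * (EB \<eta> h / (1 - EA \<eta> h)) + EB2 \<eta> h) / (1 - EA2 \<eta> h)"

lemma alg_id:
  fixes h k D0 p r q bb :: real
  assumes h: "h \<noteq> 0" and u: "1 - k * h \<noteq> 0" and v: "D0 - h * p \<noteq> 0" and d: "D0 \<noteq> 0"
  shows "(((h * r) * ((h^2 * bb) / (1 - (1 - h * (1 - k * h)))) + h * (1 + h * q)) / (1 - (1 - h * (D0 - h * p))) - 1 / D0) / h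
       = (r * bb / (1 - k * h) + q + p / D0) / (D0 - h * p)"
proof -
  define U where "U = 1 - k * h"
  define V where "V = D0 - h * p"
  have U: "U \<noteq> 0" and V: "V \<noteq> 0" using u v by (simp_all add: U_def V_def)
  have hp: "h * p = D0 - V" by (simp add: V_def)
  have "(((h * r) * ((h^2 * bb) / (h * U)) + h * (1 + h * q)) / (h * V) - 1 / D0) / h
       = (r * bb / U + q + p / D0) / V"
    using h U V d hp by (simp add: field_simps power2_eq_square; algebra)
  then show ?thesis by (simp add: U_def V_def)
qed

lemma Lim2_bigo:
  assumes "\<eta>\<^sup>2 < 2"
  shows "(\<lambda>h. Lim2 \<eta> h - 1 / (2 - \<eta>\<^sup>2)) \<in> O[at_right 0](\<lambda>h. h)"
proof -
  define k where "k = (2 + \<eta>^2)^2 / 8"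
  define D0 where "D0 = 2 - \<eta>^2"
  define bb where "bb = \<eta> / 4 + \<eta>^3 / 8"
  define R where "R h = (rr \<eta> h * bb / (1 - k * h) + qq \<eta> h + pp \<eta> h / D0) / (D0 - h * pp \<eta> h)" for h
  have D0: "D0 \<noteq> 0" using assms by (simp add: D0_def)
  have t1: "((\<lambda>h. 1 - k * h) \<longlongrightarrow> 1) (at_right 0)"
    by (rule tendsto_eq_intros refl | simp)+
  have t2: "((\<lambda>h. D0 - h * pp \<eta> h) \<longlongrightarrow> D0) (at_right 0)"
    unfolding pp_def by (rule tendsto_eq_intros refl | simp)+
  have ev1: "eventually (\<lambda>h. 1 - k * h \<noteq> 0) (at_right 0)"
    by (rule tendsto_imp_eventually_ne[OF t1]) simp
  have ev2: "eventually (\<lambda>h. D0 - h * pp \<eta> h \<noteq> 0) (at_right 0)"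
    by (rule tendsto_imp_eventually_ne[OF t2 D0])
  have ev3: "eventually (\<lambda>h::real. h \<noteq> 0) (at_right 0)"
    using eventually_at_right_less[of "0::real"] by (rule eventually_mono) simp
  have eq: "eventually (\<lambda>h. (Lim2 \<eta> h - 1 / (2 - \<eta>\<^sup>2)) / h = R h) (at_right 0)"
    using ev1 ev2 ev3
  proof eventually_elim
    case (elim h)
    show ?case
      unfolding Lim2_def fac_EAB2 fac_EB2 fac_EA2 fac_EA fac_EB R_def
      using alg_id[OF elim(3) elim(1) elim(2) D0, of "rr \<eta> h" bb "qq \<eta> h"]
      by (simp add: k_def D0_def bb_def)
  qed
  have tR: "(R \<longlongrightarrow> R 0) (at_right 0)"
  proof -
    have "isCont R 0" unfolding R_def rr_def qq_def pp_def
      using D0 by (intro continuous_intros) auto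
    then show ?thesis unfolding isCont_def by (rule tendsto_mono[rotated]) (simp add: at_le)
  qed
  have "((\<lambda>h. (Lim2 \<eta> h - 1 / (2 - \<eta>\<^sup>2)) / h) \<longlongrightarrow> R 0) (at_right 0)"
    using tendsto_cong[OF eq] tR by simp
  then show ?thesis by (rule bigoI_tendsto) (rule ev3)
qed

theorem mainTheorem7:
  fixes \<eta> :: real
  assumes "\<eta>\<^sup>2 < 2"
  shows "\<exists>L :: real \<Rightarrow> real.
           (\<forall>h. heun_admissible \<eta> h \<longrightarrow>
              (\<forall>(M :: 'a measure) dW x0. iid_gaussian_increments M h dW \<longrightarrow>
                 (heun_mu2 M \<eta> h x0 dW \<longlonglongrightarrow> L h)))
         \<and> (\<lambda>h. L h - 1 / (2 - \<eta>\<^sup>2)) \<in> O[at_right 0](\<lambda>h. h)"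
proof (intro exI conjI allI impI)
  show "(\<lambda>h. Lim2 \<eta> h - 1 / (2 - \<eta>\<^sup>2)) \<in> O[at_right 0](\<lambda>h. h)" by (rule Lim2_bigo[OF assms])
next
  fix h :: real and M :: "'a measure" and dW x0
  assume adm: "heun_admissible \<eta> h" and iid: "iid_gaussian_increments M h dW"
  interpret prob_space M using iid by (simp add: iid_gaussian_increments_def)
  have ind: "indep_vars (\<lambda>_. borel) dW UNIV" and D: "\<And>n. distributed M lborel (dW n) (\<lambda>x. ennreal (normal_density 0 (sqrt h) x))"
    using iid by (auto simp: iid_gaussian_increments_def)
  have h: "h > 0" using adm by (simp add: heun_admissible_def)
  note mi = main_ind[OF ind D h, of \<eta> x0]
  define m1 where "m1 n = expectation (heun_iter \<eta> h x0 dW n)" for n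
  define m2 where "m2 n = expectation (\<lambda>\<omega>. (heun_iter \<eta> h x0 dW n \<omega>)^2)" for n
  have c1: "m1 \<longlonglongrightarrow> EB \<eta> h / (1 - EA \<eta> h)"
    by (rule affine_conv[OF EA_bound[OF adm], where s="\<lambda>_. EB \<eta> h"]) (auto simp: m1_def mi)
  have c2: "m2 \<longlonglongrightarrow> (EAB2 \<eta> h * (EB \<eta> h / (1 - EA \<eta> h)) + EB2 \<eta> h) / (1 - EA2 \<eta> h)"
  proof (rule affine_conv[OF EA2_bound[OF adm], where s="\<lambda>n. EAB2 \<eta> h * m1 n + EB2 \<eta> h"])
    show "(\<lambda>n. EAB2 \<eta> h * m1 n + EB2 \<eta> h) \<longlonglongrightarrow> EAB2 \<eta> h * (EB \<eta> h / (1 - EA \<eta> h)) + EB2 \<eta> h"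
      by (intro tendsto_intros c1)
    show "m2 (Suc n) = EA2 \<eta> h * m2 n + (EAB2 \<eta> h * m1 n + EB2 \<eta> h)" for n
      using mi[of n] by (simp add: m1_def m2_def)
  qed
  have "heun_mu2 M \<eta> h x0 dW = m2" by (rule ext) (simp add: heun_mu2_def m2_def)
  then show "heun_mu2 M \<eta> h x0 dW \<longlonglongrightarrow> Lim2 \<eta> h" using c2 by (simp add: Lim2_def)
qed

end
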